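(* Let $\Xi:M_p\to M_q$ be an entanglement-breaking channel of the form $\Xi(X)=\sum_{i=1}^l\mathrm{Tr}[XM_i]\sigma_i$, where $(M_i)_{i=1}^l$ is a POVM on $\mathbb C^p$ and $\sigma_i\in D_q$, and let $\Psi:M_N\to M_k$ be a quantum channel. Then the image of all states under $\Xi\otimes\Psi$ is $$K_{\Xi\otimes\Psi}=(\Xi\otimes\Psi)(D_{pN})=\mathrm{hull}\Big\{\sum_{i=1}^l\sigma_i\otimes\Psi(BM_i^TB^* ):\ B\in M_{N,p}(\mathbb C),\ \mathrm{Tr}[BB^*]=1\Big\}.$$
   Context: A POVM is a family of positive semidefinite matrices summing to the identity. $M_i^T$ is the transpose in the canonical basis; $M_{N,p}(\mathbb C)$ is the space of $N\times p$ complex matrices; $\mathrm{hull}$ is the convex hull; $D_d$ is the set of $d\times d$ density matrices. *)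

theory Defs
  imports "Jordan_Normal_Form.Schur_Decomposition"
begin

text \<open>Tensor (Kronecker) products use the
  convention that the first factor is the outer (block) index.\<close>

definition mtrace :: "complex mat \<Rightarrow> complex" where
  "mtrace A = (\<Sum>i<dim_row A. A $$ (i, i))"

definition psd :: "nat \<Rightarrow> complex mat \<Rightarrow> bool" where
  "psd n A \<longleftrightarrow> A \<in> carrier_mat n n \<and>
     (\<forall>v \<in> carrier_vec n. Im ((A *\<^sub>v v) \<bullet>c v) = 0 \<and> Re ((A *\<^sub>v v) \<bullet>c v) \<ge> 0)"

definition density :: "nat \<Rightarrow> complex mat \<Rightarrow> bool" where
  "density n A \<longleftrightarrow> psd n A \<and> mtrace A = 1"

definition msum :: "nat \<Rightarrow> nat \<Rightarrow> 'i set \<Rightarrow> ('i \<Rightarrow> complex mat) \<Rightarrow> complex mat" where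
  "msum r c I F = mat r c (\<lambda>(i, j). \<Sum>t\<in>I. F t $$ (i, j))"

definition POVM :: "nat \<Rightarrow> nat \<Rightarrow> (nat \<Rightarrow> complex mat) \<Rightarrow> bool" where
  "POVM p l M \<longleftrightarrow> (\<forall>i<l. psd p (M i)) \<and> msum p p {..<l} M = 1\<^sub>m p"

definition kron :: "complex mat \<Rightarrow> complex mat \<Rightarrow> complex mat" where
  "kron A B = mat (dim_row A * dim_row B) (dim_col A * dim_col B)
     (\<lambda>(i, j). A $$ (i div dim_row B, j div dim_col B) * B $$ (i mod dim_row B, j mod dim_col B))"

definition unit_mat :: "nat \<Rightarrow> nat \<Rightarrow> nat \<Rightarrow> complex mat" where
  "unit_mat p a b = mat p p (\<lambda>(i, j). if i = a \<and> j = b then 1 else 0)"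

text \<open>Block (a,b) of size N x N of a (p*N) x (p*N) matrix, i.e. viewing
  M_{pN} = M_p \<otimes> M_N.\<close>
definition block :: "nat \<Rightarrow> complex mat \<Rightarrow> nat \<Rightarrow> nat \<Rightarrow> complex mat" where
  "block N X a b = mat N N (\<lambda>(i, j). X $$ (a * N + i, b * N + j))"

text \<open>Tensor product of linear maps Phi : M_p -> M_q and Psi : M_N -> M_k,
  as a map M_{pN} -> M_{qk}: (Phi \<otimes> Psi)(X) = sum_{a,b} Phi(E_ab) \<otimes> Psi(X_ab).\<close>
definition tensor_map :: "nat \<Rightarrow> nat \<Rightarrow> nat \<Rightarrow> nat \<Rightarrow>
    (complex mat \<Rightarrow> complex mat) \<Rightarrow> (complex mat \<Rightarrow> complex mat) \<Rightarrow> complex mat \<Rightarrow> complex mat" where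
  "tensor_map p N q k \<Phi> \<Psi> X = msum (q * k) (q * k) ({..<p} \<times> {..<p})
     (\<lambda>(a, b). kron (\<Phi> (unit_mat p a b)) (\<Psi> (block N X a b)))"

definition linear_map :: "nat \<Rightarrow> nat \<Rightarrow> (complex mat \<Rightarrow> complex mat) \<Rightarrow> bool" where
  "linear_map N k \<Psi> \<longleftrightarrow> (\<forall>A \<in> carrier_mat N N. \<Psi> A \<in> carrier_mat k k) \<and>
     (\<forall>A \<in> carrier_mat N N. \<forall>B \<in> carrier_mat N N. \<Psi> (A + B) = \<Psi> A + \<Psi> B) \<and>
     (\<forall>A \<in> carrier_mat N N. \<forall>c. \<Psi> (c \<cdot>\<^sub>m A) = c \<cdot>\<^sub>m \<Psi> A)"

definition completely_positive :: "nat \<Rightarrow> nat \<Rightarrow> (complex mat \<Rightarrow> complex mat) \<Rightarrow> bool" where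
  "completely_positive N k \<Psi> \<longleftrightarrow>
     (\<forall>m X. psd (m * N) X \<longrightarrow> psd (m * k) (tensor_map m N m k (\<lambda>A. A) \<Psi> X))"

definition trace_preserving :: "nat \<Rightarrow> (complex mat \<Rightarrow> complex mat) \<Rightarrow> bool" where
  "trace_preserving N \<Psi> \<longleftrightarrow> (\<forall>A \<in> carrier_mat N N. mtrace (\<Psi> A) = mtrace A)"

definition quantum_channel :: "nat \<Rightarrow> nat \<Rightarrow> (complex mat \<Rightarrow> complex mat) \<Rightarrow> bool" where
  "quantum_channel N k \<Psi> \<longleftrightarrow> linear_map N k \<Psi> \<and> completely_positive N k \<Psi> \<and> trace_preserving N \<Psi>"

definition mat_hull :: "nat \<Rightarrow> nat \<Rightarrow> complex mat set \<Rightarrow> complex mat set" where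
  "mat_hull r c S = {A. \<exists>n (w :: nat \<Rightarrow> real) F. (\<forall>t<n. 0 \<le> w t \<and> F t \<in> S) \<and> (\<Sum>t<n. w t) = 1 \<and>
      A = msum r c {..<n} (\<lambda>t. complex_of_real (w t) \<cdot>\<^sub>m F t)}"

end

theory Submission
  imports Defs
begin


definition qf :: "nat \<Rightarrow> (nat\<Rightarrow>nat\<Rightarrow>complex) \<Rightarrow> (nat\<Rightarrow>complex) \<Rightarrow> complex" where
 "qf n f v = (\<Sum>i<n. (\<Sum>j<n. f i j * v j) * cnj (v i))"
definition Pf :: "nat \<Rightarrow> (nat\<Rightarrow>nat\<Rightarrow>complex) \<Rightarrow> bool" where
 "Pf n f \<longleftrightarrow> (\<forall>v. Im (qf n f v) = 0 \<and> Re (qf n f v) \<ge> 0)"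

lemma qf_cong: "(\<And>i. i < n \<Longrightarrow> v i = w i) \<Longrightarrow> qf n f v = qf n f w"
  unfolding qf_def by (intro sum.cong refl arg_cong2[where f="(*)"]) auto

lemma psd_Pf: "psd n X \<longleftrightarrow> X \<in> carrier_mat n n \<and> Pf n (\<lambda>i j. X $$ (i,j))"
proof -
  have eq: "(X *\<^sub>v v) \<bullet>c v = qf n (\<lambda>i j. X $$ (i,j)) (\<lambda>i. v $ i)"
    if "X \<in> carrier_mat n n" "v \<in> carrier_vec n" for v
    using that unfolding qf_def
    by (auto simp: scalar_prod_def mult_mat_vec_def lessThan_atLeast0 intro!: sum.cong)
  show ?thesis
  proof
    assume "psd n X"
    then have X: "X \<in> carrier_mat n n" and h: "\<forall>v\<in>carrier_vec n. Im ((X *\<^sub>v v) \<bullet>c v) = 0 \<and> 0 \<le> Re ((X *\<^sub>v v) \<bullet>c v)"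
      unfolding psd_def by auto
    have "Im (qf n (\<lambda>i j. X $$ (i,j)) v) = 0 \<and> Re (qf n (\<lambda>i j. X $$ (i,j)) v) \<ge> 0" for v
    proof -
      have "qf n (\<lambda>i j. X $$ (i,j)) v = qf n (\<lambda>i j. X $$ (i,j)) (\<lambda>i. vec n v $ i)"
        by (rule qf_cong) auto
      also have "\<dots> = (X *\<^sub>v vec n v) \<bullet>c vec n v" using eq[OF X, of "vec n v"] by auto
      finally show ?thesis using h by auto
    qed
    then show "X \<in> carrier_mat n n \<and> Pf n (\<lambda>i j. X $$ (i,j))" using X unfolding Pf_def by auto
  next
    assume "X \<in> carrier_mat n n \<and> Pf n (\<lambda>i j. X $$ (i,j))"
    then show "psd n X" unfolding psd_def Pf_def using eq by auto
  qed
qed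

lemma sum_two_delta:
  assumes "i < (n::nat)" "j < n" "i \<noteq> j"
  shows "(\<Sum>x<n. h x * (if x = i then a else if x = j then b else 0)) = h i * a + h j * (b::complex)"
proof -
  have "(\<Sum>x<n. h x * (if x = i then a else if x = j then b else 0)) =
      (\<Sum>x<n. (if x = i then h x * a else 0)) + (\<Sum>x<n. (if x = j then h x * b else 0))"
    unfolding sum.distrib[symmetric] by (rule sum.cong) (use assms in auto)
  also have "\<dots> = h i * a + h j * b" using assms by simp
  finally show ?thesis .
qed

lemma qf_two:
  assumes "i < n" "j < n" "i \<noteq> j"
  shows "qf n f (\<lambda>x. if x = i then a else if x = j then b else 0) =
    f i i * a * cnj a + f i j * b * cnj a + f j i * a * cnj b + f j j * b * cnj b"
proof -
  have c: "cnj (if x = i then a else if x = j then b else 0) = (if x = i then cnj a else if x = j then cnj b else 0)" for x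
    by auto
  show ?thesis unfolding qf_def c sum_two_delta[OF assms]
    by (simp add: distrib_right)
qed

lemma qf_one:
  assumes "i < n"
  shows "qf n f (\<lambda>x. if x = i then a else 0) = f i i * a * cnj a"
  using assms unfolding qf_def by (simp add: if_distrib cong: if_cong)

lemma Pf_diag: assumes "Pf n f" "i < n" shows "Im (f i i) = 0" "Re (f i i) \<ge> 0"
proof -
  have "qf n f (\<lambda>x. if x = i then 1 else 0) = f i i" using qf_one[OF assms(2), of f 1] by simp
  then show "Im (f i i) = 0" "Re (f i i) \<ge> 0" using assms(1) unfolding Pf_def by metis+
qed

lemma Pf_herm: assumes P: "Pf n f" and ij: "i < n" "j < n" shows "f j i = cnj (f i j)"
proof (cases "i = j")
  case True then show ?thesis using Pf_diag[OF P, of i] ij by (simp add: complex_eq_iff)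
next
  case False
  have d: "Im (f i i) = 0" "Im (f j j) = 0" using Pf_diag[OF P] ij by auto
  have 1: "Im (qf n f (\<lambda>x. if x = i then 1 else if x = j then 1 else 0)) = 0" using P unfolding Pf_def by auto
  have 2: "Im (qf n f (\<lambda>x. if x = i then 1 else if x = j then \<i> else 0)) = 0" using P unfolding Pf_def by auto
  from 1 2 d show ?thesis unfolding qf_two[OF ij False] by (simp add: complex_eq_iff)
qed

lemma Pf_zero_row:
  assumes P: "Pf n f" and m: "m < n" and j: "j < n" and z: "f m m = 0"
  shows "f m j = 0"
proof (rule ccontr)
  assume c0: "f m j \<noteq> 0"
  then have mj: "m \<noteq> j" using z by auto
  define c where "c = f m j"
  define r where "r = (Re c)^2 + (Im c)^2"
  have r: "r > 0" using c0 unfolding r_def c_def by (simp add: complex_eq_iff sum_power2_gt_zero_iff)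
  define s where "s = (Re (f j j) + 1) / (2 * r)"
  define t where "t = - complex_of_real s * c"
  have h: "f j m = cnj c" using Pf_herm[OF P m j] c_def by simp
  have "Re (qf n f (\<lambda>x. if x = m then t else if x = j then 1 else 0)) \<ge> 0"
    using P unfolding Pf_def by auto
  also have "Re (qf n f (\<lambda>x. if x = m then t else if x = j then 1 else 0)) = Re (f j j) - 2 * s * r"
    unfolding qf_two[OF m j mj] z h unfolding t_def r_def c_def[symmetric]
    by (simp add: algebra_simps power2_eq_square)
  also have "\<dots> = -1" unfolding s_def using r by (simp add: field_simps)
  finally show False by simp
qed

lemma Pf_schur:
  assumes P: "Pf n f" and m: "m < n" and nz: "f m m \<noteq> 0"
  shows "Pf n (\<lambda>i j. f i j - f i m * f m j / f m m)"
  unfolding Pf_def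
proof
  fix v
  define S where "S = (\<Sum>j<n. f m j * v j)"
  define c where "c = S / f m m"
  define w where "w = (\<lambda>x. v x - (if x = m then c else 0))"
  define E where "E = (\<lambda>i. (\<Sum>j<n. f i j * v j) - f i m * c)"
  have inner: "(\<Sum>j<n. f i j * w j) = E i" for i
  proof -
    have "(\<Sum>j<n. f i j * w j) = (\<Sum>j<n. f i j * v j) - (\<Sum>j<n. if j = m then f i j * c else 0)"
      unfolding w_def sum_subtractf[symmetric] by (rule sum.cong) (auto simp: algebra_simps)
    then show ?thesis using m unfolding E_def by simp
  qed
  have Em: "E m = 0" unfolding E_def c_def S_def using nz by simp
  have "qf n f w = (\<Sum>i<n. E i * cnj (v i)) - (\<Sum>i<n. if i = m then E i * cnj c else 0)"
    unfolding qf_def inner sum_subtractf[symmetric] by (rule sum.cong) (auto simp: w_def algebra_simps)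
  also have "\<dots> = (\<Sum>i<n. E i * cnj (v i))" using m Em by simp
  also have "\<dots> = qf n (\<lambda>i j. f i j - f i m * f m j / f m m) v"
  proof -
    have "(\<Sum>j<n. (f i j - f i m * f m j / f m m) * v j) = E i" for i
    proof -
      have "(\<Sum>j<n. (f i j - f i m * f m j / f m m) * v j) = (\<Sum>j<n. f i j * v j) - f i m / f m m * (\<Sum>j<n. f m j * v j)"
        by (simp add: sum_subtractf sum_distrib_left algebra_simps)
      then show ?thesis unfolding E_def c_def S_def by simp
    qed
    then show ?thesis unfolding qf_def by simp
  qed
  finally have "qf n f w = qf n (\<lambda>i j. f i j - f i m * f m j / f m m) v" .
  then show "Im (qf n (\<lambda>i j. f i j - f i m * f m j / f m m) v) = 0 \<and>
    0 \<le> Re (qf n (\<lambda>i j. f i j - f i m * f m j / f m m) v)" using P unfolding Pf_def by metis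
qed

lemma Pf_decomp_aux:
  "Pf n Y \<Longrightarrow> (\<forall>i<n. \<forall>j<n. (i < m \<or> j < m) \<longrightarrow> Y i j = 0) \<Longrightarrow>
   \<exists>u. \<forall>i<n. \<forall>j<n. Y i j = (\<Sum>t\<in>{m..<n}. u t i * cnj (u t j))"
proof (induction "n - m" arbitrary: Y m)
  case 0
  then show ?case by auto
next
  case (Suc d)
  then have m: "m < n" by auto
  have P: "Pf n Y" using Suc by auto
  have split: "{m..<n} = insert m {Suc m..<n}" using m by auto
  have d: "d = n - Suc m" using Suc.hyps(2) by arith
  show ?case
  proof (cases "Y m m = 0")
    case True
    have row: "Y m j = 0" if "j < n" for j using Pf_zero_row[OF P m that True] .
    have col: "Y i m = 0" if "i < n" for i using Pf_herm[OF P m that] row[OF that] by simp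
    have "\<forall>i<n. \<forall>j<n. (i < Suc m \<or> j < Suc m) \<longrightarrow> Y i j = 0"
      using Suc.prems(2) row col by (metis less_Suc_eq)
    then obtain u where u: "\<forall>i<n. \<forall>j<n. Y i j = (\<Sum>t\<in>{Suc m..<n}. u t i * cnj (u t j))"
      using Suc.hyps(1)[of "Suc m" Y] d P by auto
    define u' where "u' = u(m := (\<lambda>_. 0))"
    have "(\<Sum>t\<in>{m..<n}. u' t i * cnj (u' t j)) = (\<Sum>t\<in>{Suc m..<n}. u t i * cnj (u t j))" for i j
      unfolding split u'_def by (auto intro!: sum.cong)
    then show ?thesis using u by metis
  next
    case False
    define r where "r = Re (Y m m)"
    have Ymm: "Y m m = complex_of_real r" using Pf_diag[OF P m] unfolding r_def by (simp add: complex_eq_iff)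
    have r: "r > 0" using Pf_diag[OF P m] False Ymm r_def by (metis less_eq_real_def of_real_0)
    define g where "g = (\<lambda>i j. Y i j - Y i m * Y m j / Y m m)"
    have Pg: "Pf n g" unfolding g_def by (rule Pf_schur[OF P m False])
    have z: "Y i j = 0" if "i < n" "j < n" "i < m \<or> j < m" for i j using Suc.prems(2) that by auto
    have "\<forall>i<n. \<forall>j<n. (i < Suc m \<or> j < Suc m) \<longrightarrow> g i j = 0"
    proof (intro allI impI)
      fix i j assume i: "i < n" and j: "j < n" and ij: "i < Suc m \<or> j < Suc m"
      show "g i j = 0"
      proof (cases "i < m \<or> j < m")
        case True
        then show ?thesis unfolding g_def using z[OF i j] z[OF i m] z[OF m j] by auto
      next
        case False
        then have "i = m \<or> j = m" using ij by auto
        then show ?thesis unfolding g_def using \<open>Y m m \<noteq> 0\<close> by auto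
      qed
    qed
    then obtain u where u: "\<forall>i<n. \<forall>j<n. g i j = (\<Sum>t\<in>{Suc m..<n}. u t i * cnj (u t j))"
      using Suc.hyps(1)[of "Suc m" g] d Pg by auto
    define u' where "u' = u(m := (\<lambda>i. Y i m / complex_of_real (sqrt r)))"
    have "Y i j = (\<Sum>t\<in>{m..<n}. u' t i * cnj (u' t j))" if i: "i < n" and j: "j < n" for i j
    proof -
      have "(\<Sum>t\<in>{m..<n}. u' t i * cnj (u' t j)) = u' m i * cnj (u' m j) + (\<Sum>t\<in>{Suc m..<n}. u t i * cnj (u t j))"
        unfolding split u'_def by (auto intro!: sum.cong)
      also have "u' m i * cnj (u' m j) = Y i m * Y m j / Y m m"
      proof -
        have "cnj (Y j m) = Y m j" using Pf_herm[OF P j m] by simp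
        moreover have "complex_of_real (sqrt r) * complex_of_real (sqrt r) = Y m m"
          using r Ymm by (simp flip: of_real_mult)
        ultimately show ?thesis unfolding u'_def by simp
      qed
      also have "(\<Sum>t\<in>{Suc m..<n}. u t i * cnj (u t j)) = g i j" using u i j by auto
      finally show ?thesis unfolding g_def by simp
    qed
    then show ?thesis by blast
  qed
qed

lemma Pf_decomp: "Pf n Y \<Longrightarrow> \<exists>u. \<forall>i<n. \<forall>j<n. Y i j = (\<Sum>t<n. u t i * cnj (u t j))"
  using Pf_decomp_aux[of n Y 0] by (simp add: atLeast0LessThan)



lemma msum_carrier[simp]: "msum r c I F \<in> carrier_mat r c"
  and msum_dims[simp]: "dim_row (msum r c I F) = r" "dim_col (msum r c I F) = c"
  by (auto simp: msum_def)

lemma msum_index[simp]: "i < r \<Longrightarrow> j < c \<Longrightarrow> msum r c I F $$ (i,j) = (\<Sum>t\<in>I. F t $$ (i,j))"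
  by (simp add: msum_def)

lemma msum_cong: "(\<And>t. t \<in> I \<Longrightarrow> F t = G t) \<Longrightarrow> msum r c I F = msum r c I G"
  unfolding msum_def by (intro cong_mat refl sum.cong) auto

lemma msum_empty: "msum r c {} F = 0\<^sub>m r c"
  by (rule eq_matI) auto

lemma msum_insert: "finite I \<Longrightarrow> x \<notin> I \<Longrightarrow> F x \<in> carrier_mat r c \<Longrightarrow>
   msum r c (insert x I) F = F x + msum r c I F"
  by (rule eq_matI) auto

lemma lin_zero: assumes "linear_map N k \<Psi>" shows "\<Psi> (0\<^sub>m N N) = 0\<^sub>m k k"
proof -
  have c: "\<Psi> (0\<^sub>m N N) \<in> carrier_mat k k" using assms unfolding linear_map_def by auto
  have "\<Psi> (0\<^sub>m N N) = \<Psi> (0 \<cdot>\<^sub>m 0\<^sub>m N N)" by simp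
  also have "\<dots> = 0 \<cdot>\<^sub>m \<Psi> (0\<^sub>m N N)" using assms unfolding linear_map_def by (meson zero_carrier_mat)
  also have "\<dots> = 0\<^sub>m k k" using c by (intro eq_matI) auto
  finally show ?thesis .
qed

lemma lin_msum:
  assumes L: "linear_map N k \<Psi>" and fin: "finite I" and A: "\<forall>t\<in>I. A t \<in> carrier_mat N N"
  shows "\<Psi> (msum N N I (\<lambda>t. c t \<cdot>\<^sub>m A t)) = msum k k I (\<lambda>t. c t \<cdot>\<^sub>m \<Psi> (A t))"
  using fin A
proof (induction I rule: finite_induct)
  case empty
  then show ?case using lin_zero[OF L] by (simp add: msum_empty)
next
  case (insert x I)
  have Ax: "A x \<in> carrier_mat N N" using insert by auto
  have PAx: "\<Psi> (A x) \<in> carrier_mat k k" using L Ax unfolding linear_map_def by auto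
  have "\<Psi> (msum N N (insert x I) (\<lambda>t. c t \<cdot>\<^sub>m A t)) = \<Psi> (c x \<cdot>\<^sub>m A x + msum N N I (\<lambda>t. c t \<cdot>\<^sub>m A t))"
    using insert Ax by (subst msum_insert) auto
  also have "\<dots> = \<Psi> (c x \<cdot>\<^sub>m A x) + \<Psi> (msum N N I (\<lambda>t. c t \<cdot>\<^sub>m A t))"
    using L Ax unfolding linear_map_def by (meson msum_carrier smult_carrier_mat)
  also have "\<Psi> (c x \<cdot>\<^sub>m A x) = c x \<cdot>\<^sub>m \<Psi> (A x)" using L Ax unfolding linear_map_def by blast
  also have "\<Psi> (msum N N I (\<lambda>t. c t \<cdot>\<^sub>m A t)) = msum k k I (\<lambda>t. c t \<cdot>\<^sub>m \<Psi> (A t))"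
    using insert by auto
  also have "c x \<cdot>\<^sub>m \<Psi> (A x) + msum k k I (\<lambda>t. c t \<cdot>\<^sub>m \<Psi> (A t)) = msum k k (insert x I) (\<lambda>t. c t \<cdot>\<^sub>m \<Psi> (A t))"
    using insert PAx by (subst msum_insert) auto
  finally show ?case .
qed

lemma kron_index:
  assumes "A \<in> carrier_mat q q" "B \<in> carrier_mat k k" "r < q * k" "s < q * k"
  shows "kron A B $$ (r,s) = A $$ (r div k, s div k) * B $$ (r mod k, s mod k)"
  using assms unfolding kron_def by simp

lemma kron_carrier: "A \<in> carrier_mat q q \<Longrightarrow> B \<in> carrier_mat k k \<Longrightarrow> kron A B \<in> carrier_mat (q*k) (q*k)"
  unfolding kron_def by auto

lemma mtrace_unit:
  assumes "Mi \<in> carrier_mat p p" "a < p" "b < p"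
  shows "mtrace (unit_mat p a b * Mi) = Mi $$ (b,a)"
proof -
  have e: "(unit_mat p a b * Mi) $$ (x,x) = (if x = a then Mi $$ (b,a) else 0)" if x: "x < p" for x
  proof -
    have [simp]: "\<And>P y. (if P then 1 else 0) * (y::complex) = (if P then y else 0)" by auto
    show ?thesis using assms x by (auto simp: unit_mat_def scalar_prod_def)
  qed
  have "mtrace (unit_mat p a b * Mi) = (\<Sum>x<p. if x = a then Mi $$ (b,a) else 0)"
    unfolding mtrace_def using assms e
    by (intro sum.cong) (auto simp: unit_mat_def)
  then show ?thesis using assms by simp
qed

definition R :: "nat \<Rightarrow> nat \<Rightarrow> complex mat \<Rightarrow> complex mat \<Rightarrow> complex mat" where
  "R p N Mi X = msum N N ({..<p}\<times>{..<p}) (\<lambda>t. Mi $$ (snd t, fst t) \<cdot>\<^sub>m block N X (fst t) (snd t))"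

lemma block_carrier[simp]: "block N X a b \<in> carrier_mat N N"
  by (simp add: block_def)

lemma T_formula:
  assumes Mc: "\<forall>i<l. M i \<in> carrier_mat p p" and sc: "\<forall>i<l. \<sigma> i \<in> carrier_mat q q"
    and Xi: "\<And>X. \<Xi> X = msum q q {..<l} (\<lambda>i. mtrace (X * M i) \<cdot>\<^sub>m \<sigma> i)"
    and L: "linear_map N k \<Psi>" and k: "0 < k"
  shows "tensor_map p N q k \<Xi> \<Psi> X = msum (q*k) (q*k) {..<l} (\<lambda>i. kron (\<sigma> i) (\<Psi> (R p N (M i) X)))"
proof (rule eq_matI)
  fix r s assume r: "r < dim_row (msum (q*k) (q*k) {..<l} (\<lambda>i. kron (\<sigma> i) (\<Psi> (R p N (M i) X))))"
    and s: "s < dim_col (msum (q*k) (q*k) {..<l} (\<lambda>i. kron (\<sigma> i) (\<Psi> (R p N (M i) X))))"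
  then have r: "r < q*k" and s: "s < q*k" by auto
  have rd: "r div k < q" and sd: "s div k < q" using r s by (auto simp: less_mult_imp_div_less)
  have rm: "r mod k < k" and sm: "s mod k < k" using k by auto
  let ?P = "\<lambda>t. \<Psi> (block N X (fst t) (snd t)) $$ (r mod k, s mod k)"
  let ?I = "{..<p}\<times>{..<p}"
  have Pc: "\<Psi> (block N X a b) \<in> carrier_mat k k" for a b using L unfolding linear_map_def by auto
  have "tensor_map p N q k \<Xi> \<Psi> X $$ (r,s) =
     (\<Sum>t\<in>?I. \<Sum>i<l. M i $$ (snd t, fst t) * \<sigma> i $$ (r div k, s div k) * ?P t)"
    unfolding tensor_map_def using r s
  proof (simp, intro sum.cong refl)
    fix t assume t: "t \<in> ?I"
    obtain a b where ab: "t = (a,b)" by force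
    have a: "a < p" and b: "b < p" using t ab by auto
    have Xc: "\<Xi> (unit_mat p a b) \<in> carrier_mat q q" using Xi by simp
    have "kron (\<Xi> (unit_mat p a b)) (\<Psi> (block N X a b)) $$ (r, s) =
       \<Xi> (unit_mat p a b) $$ (r div k, s div k) * \<Psi> (block N X a b) $$ (r mod k, s mod k)"
      by (rule kron_index[OF Xc Pc r s])
    also have "\<Xi> (unit_mat p a b) $$ (r div k, s div k) = (\<Sum>i<l. M i $$ (b,a) * \<sigma> i $$ (r div k, s div k))"
      unfolding Xi using rd sd sc Mc a b by (auto simp: mtrace_unit intro!: sum.cong)
    finally show "(case t of (a, b) \<Rightarrow> kron (\<Xi> (unit_mat p a b)) (\<Psi> (block N X a b))) $$ (r, s) =
       (\<Sum>i<l. M i $$ (snd t, fst t) * \<sigma> i $$ (r div k, s div k) * ?P t)"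
      unfolding ab by (simp add: sum_distrib_right)
  qed
  also have "\<dots> = (\<Sum>i<l. \<Sum>t\<in>?I. M i $$ (snd t, fst t) * \<sigma> i $$ (r div k, s div k) * ?P t)"
    by (rule sum.swap)
  also have "\<dots> = msum (q*k) (q*k) {..<l} (\<lambda>i. kron (\<sigma> i) (\<Psi> (R p N (M i) X))) $$ (r,s)"
    using r s
  proof (simp, intro sum.cong refl)
    fix i assume i: "i \<in> {..<l}"
    have Rc: "\<Psi> (R p N (M i) X) \<in> carrier_mat k k" using L unfolding linear_map_def R_def by auto
    have "\<Psi> (R p N (M i) X) = msum k k ?I (\<lambda>t. M i $$ (snd t, fst t) \<cdot>\<^sub>m \<Psi> (block N X (fst t) (snd t)))"
      unfolding R_def by (rule lin_msum[OF L]) auto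
    then have "\<Psi> (R p N (M i) X) $$ (r mod k, s mod k) = (\<Sum>t\<in>?I. M i $$ (snd t, fst t) * ?P t)"
      using rm sm Pc[THEN carrier_matD(1)] Pc[THEN carrier_matD(2)] by simp
    then show "(\<Sum>t\<in>?I. M i $$ (snd t, fst t) * \<sigma> i $$ (r div k, s div k) * ?P t) =
        kron (\<sigma> i) (\<Psi> (R p N (M i) X)) $$ (r, s)"
      using kron_index[OF _ Rc r s, of "\<sigma> i"] sc i by (simp add: sum_distrib_left algebra_simps)
  qed
  finally show "tensor_map p N q k \<Xi> \<Psi> X $$ (r,s) = msum (q*k) (q*k) {..<l} (\<lambda>i. kron (\<sigma> i) (\<Psi> (R p N (M i) X))) $$ (r,s)" .
next
  show "dim_row (tensor_map p N q k \<Xi> \<Psi> X) = dim_row (msum (q*k) (q*k) {..<l} (\<lambda>i. kron (\<sigma> i) (\<Psi> (R p N (M i) X))))"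
    "dim_col (tensor_map p N q k \<Xi> \<Psi> X) = dim_col (msum (q*k) (q*k) {..<l} (\<lambda>i. kron (\<sigma> i) (\<Psi> (R p N (M i) X))))"
    unfolding tensor_map_def by auto
qed

lemma idx_lt: "a < (p::nat) \<Longrightarrow> j < N \<Longrightarrow> a * N + j < p * N"
proof -
  assume a: "a < p" and j: "j < N"
  have "a * N + j < a * N + N" using j by simp
  also have "\<dots> = Suc a * N" by simp
  also have "\<dots> \<le> p * N" using a by (intro mult_le_mono1) simp
  finally show ?thesis .
qed

lemma R_msum:
  assumes fin: "finite I" and X: "\<forall>t\<in>I. X t \<in> carrier_mat (p*N) (p*N)"
  shows "R p N Mi (msum (p*N) (p*N) I (\<lambda>t. c t \<cdot>\<^sub>m X t)) = msum N N I (\<lambda>t. c t \<cdot>\<^sub>m R p N Mi (X t))"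
proof (rule eq_matI)
  fix j kk assume j: "j < dim_row (msum N N I (\<lambda>t. c t \<cdot>\<^sub>m R p N Mi (X t)))"
    and kk: "kk < dim_col (msum N N I (\<lambda>t. c t \<cdot>\<^sub>m R p N Mi (X t)))"
  then have j: "j < N" and kk: "kk < N" by auto
  let ?I = "{..<p}\<times>{..<p}"
  have sm[simp]: "(c t \<cdot>\<^sub>m X t) $$ (a*N+j, b*N+kk) = c t * X t $$ (a*N+j, b*N+kk)"
    if "t \<in> I" "a < p" "b < p" for t a b using X that idx_lt j kk by auto
  have "R p N Mi (msum (p*N) (p*N) I (\<lambda>t. c t \<cdot>\<^sub>m X t)) $$ (j,kk) =
      (\<Sum>u\<in>?I. \<Sum>t\<in>I. Mi $$ (snd u, fst u) * (c t * X t $$ (fst u * N + j, snd u * N + kk)))"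
    unfolding R_def using j kk X
    by (auto simp: block_def idx_lt sum_distrib_left intro!: sum.cong)
  also have "\<dots> = (\<Sum>t\<in>I. \<Sum>u\<in>?I. Mi $$ (snd u, fst u) * (c t * X t $$ (fst u * N + j, snd u * N + kk)))"
    by (rule sum.swap)
  also have "\<dots> = msum N N I (\<lambda>t. c t \<cdot>\<^sub>m R p N Mi (X t)) $$ (j,kk)"
    unfolding R_def using j kk X
    by (auto simp: block_def idx_lt sum_distrib_left algebra_simps intro!: sum.cong)
  finally show "R p N Mi (msum (p*N) (p*N) I (\<lambda>t. c t \<cdot>\<^sub>m X t)) $$ (j,kk) = msum N N I (\<lambda>t. c t \<cdot>\<^sub>m R p N Mi (X t)) $$ (j,kk)" .
qed (auto simp: R_def)

lemma R_carrier[simp]: "R p N Mi X \<in> carrier_mat N N"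
  by (simp add: R_def)

lemma tensor_map_dims[simp]: "dim_row (tensor_map p N q k \<Xi> \<Psi> X) = q*k" "dim_col (tensor_map p N q k \<Xi> \<Psi> X) = q*k"
  by (auto simp: tensor_map_def)

lemma T_lin:
  assumes Mc: "\<forall>i<l. M i \<in> carrier_mat p p" and sc: "\<forall>i<l. \<sigma> i \<in> carrier_mat q q"
    and Xi: "\<And>X. \<Xi> X = msum q q {..<l} (\<lambda>i. mtrace (X * M i) \<cdot>\<^sub>m \<sigma> i)"
    and L: "linear_map N k \<Psi>" and k: "0 < k"
    and fin: "finite I" and X: "\<forall>t\<in>I. X t \<in> carrier_mat (p*N) (p*N)"
  shows "tensor_map p N q k \<Xi> \<Psi> (msum (p*N) (p*N) I (\<lambda>t. c t \<cdot>\<^sub>m X t)) =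
    msum (q*k) (q*k) I (\<lambda>t. c t \<cdot>\<^sub>m tensor_map p N q k \<Xi> \<Psi> (X t))"
proof (rule eq_matI)
  note TF = T_formula[OF Mc sc Xi L k]
  fix r s assume "r < dim_row (msum (q*k) (q*k) I (\<lambda>t. c t \<cdot>\<^sub>m tensor_map p N q k \<Xi> \<Psi> (X t)))"
    "s < dim_col (msum (q*k) (q*k) I (\<lambda>t. c t \<cdot>\<^sub>m tensor_map p N q k \<Xi> \<Psi> (X t)))"
  then have r: "r < q*k" and s: "s < q*k" by auto
  have rm: "r mod k < k" and sm: "s mod k < k" using k by auto
  let ?Q = "\<lambda>i t. \<Psi> (R p N (M i) (X t)) $$ (r mod k, s mod k)"
  let ?S = "\<lambda>i. \<sigma> i $$ (r div k, s div k)"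
  have Pc: "\<Psi> (R p N (M i) Y) \<in> carrier_mat k k" for i Y using L unfolding linear_map_def by auto
  have T1: "tensor_map p N q k \<Xi> \<Psi> Y $$ (r,s) = (\<Sum>i<l. ?S i * \<Psi> (R p N (M i) Y) $$ (r mod k, s mod k))" for Y
    unfolding TF using r s sc kron_index[OF _ Pc r s] by (auto intro!: sum.cong)
  have "tensor_map p N q k \<Xi> \<Psi> (msum (p*N) (p*N) I (\<lambda>t. c t \<cdot>\<^sub>m X t)) $$ (r,s) = (\<Sum>i<l. ?S i * (\<Sum>t\<in>I. c t * ?Q i t))"
    unfolding T1
  proof (intro sum.cong refl arg_cong2[where f="(*)"])
    fix i
    have "\<Psi> (R p N (M i) (msum (p*N) (p*N) I (\<lambda>t. c t \<cdot>\<^sub>m X t))) = msum k k I (\<lambda>t. c t \<cdot>\<^sub>m \<Psi> (R p N (M i) (X t)))"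
      unfolding R_msum[OF fin X] by (rule lin_msum[OF L fin]) auto
    then show "\<Psi> (R p N (M i) (msum (p*N) (p*N) I (\<lambda>t. c t \<cdot>\<^sub>m X t))) $$ (r mod k, s mod k) = (\<Sum>t\<in>I. c t * ?Q i t)"
      using rm sm Pc[THEN carrier_matD(1)] Pc[THEN carrier_matD(2)] by simp
  qed
  also have "\<dots> = (\<Sum>t\<in>I. c t * (\<Sum>i<l. ?S i * ?Q i t))"
    by (simp add: sum_distrib_left algebra_simps sum.swap[of _ I])
  also have "\<dots> = (\<Sum>t\<in>I. c t * tensor_map p N q k \<Xi> \<Psi> (X t) $$ (r,s))"
    by (simp add: T1)
  also have "\<dots> = msum (q*k) (q*k) I (\<lambda>t. c t \<cdot>\<^sub>m tensor_map p N q k \<Xi> \<Psi> (X t)) $$ (r,s)"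
    using r s by simp
  finally show "tensor_map p N q k \<Xi> \<Psi> (msum (p*N) (p*N) I (\<lambda>t. c t \<cdot>\<^sub>m X t)) $$ (r,s) =
    msum (q*k) (q*k) I (\<lambda>t. c t \<cdot>\<^sub>m tensor_map p N q k \<Xi> \<Psi> (X t)) $$ (r,s)" .
qed (auto simp: tensor_map_def)



lemma mat_adjoint_dims[simp]: "dim_row (mat_adjoint B) = dim_col B" "dim_col (mat_adjoint B) = dim_row B"
  by (auto simp: mat_adjoint_def)
lemma mat_adjoint_index[simp]: "i < dim_col B \<Longrightarrow> j < dim_row B \<Longrightarrow> mat_adjoint B $$ (i,j) = cnj (B $$ (j,i))"
  by (auto simp: mat_adjoint_def mat_of_rows_def)

definition Pm :: "nat \<Rightarrow> nat \<Rightarrow> complex mat \<Rightarrow> complex mat" where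
  "Pm p N B = mat (p*N) (p*N) (\<lambda>(r,s). B $$ (r mod N, r div N) * cnj (B $$ (s mod N, s div N)))"

lemma Pm_carrier[simp]: "Pm p N B \<in> carrier_mat (p*N) (p*N)"
  by (simp add: Pm_def)

lemma R_Pm:
  assumes B: "B \<in> carrier_mat N p" and Mi: "Mi \<in> carrier_mat p p"
  shows "R p N Mi (Pm p N B) = B * transpose_mat Mi * mat_adjoint B"
proof (rule eq_matI)
  fix j kk assume "j < dim_row (B * transpose_mat Mi * mat_adjoint B)" "kk < dim_col (B * transpose_mat Mi * mat_adjoint B)"
  then have j: "j < N" and kk: "kk < N" using B by auto
  have "R p N Mi (Pm p N B) $$ (j,kk) = (\<Sum>u\<in>{..<p}\<times>{..<p}. Mi $$ (snd u, fst u) * (B $$ (j, fst u) * cnj (B $$ (kk, snd u))))"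
    unfolding R_def using j kk by (auto simp: block_def Pm_def idx_lt intro!: sum.cong)
  also have "\<dots> = (\<Sum>a<p. \<Sum>b<p. Mi $$ (b, a) * (B $$ (j, a) * cnj (B $$ (kk, b))))"
    by (simp add: sum.cartesian_product split_def)
  also have "\<dots> = (\<Sum>b<p. \<Sum>a<p. Mi $$ (b, a) * (B $$ (j, a) * cnj (B $$ (kk, b))))"
    by (rule sum.swap)
  also have "\<dots> = (B * transpose_mat Mi * mat_adjoint B) $$ (j,kk)"
    using B Mi j kk by (auto simp: scalar_prod_def lessThan_atLeast0 sum_distrib_right sum_distrib_left algebra_simps intro!: sum.cong)
  finally show "R p N Mi (Pm p N B) $$ (j,kk) = (B * transpose_mat Mi * mat_adjoint B) $$ (j,kk)" .
qed (use B in \<open>auto simp: R_def\<close>)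

lemma sum_div_mod:
  assumes N: "0 < (N::nat)"
  shows "(\<Sum>r<p*N. h (r div N) (r mod N)) = (\<Sum>a<p. \<Sum>j<N. h a j)"
proof -
  have "(\<Sum>a<p. \<Sum>j<N. h a j) = (\<Sum>(a,j)\<in>{..<p}\<times>{..<N}. h a j)"
    by (simp add: sum.cartesian_product)
  also have "\<dots> = (\<Sum>r<p*N. h (r div N) (r mod N))"
    by (rule sum.reindex_bij_witness[where j="\<lambda>(a,j). a*N+j" and i="\<lambda>r. (r div N, r mod N)"])
      (use N in \<open>auto simp: idx_lt less_mult_imp_div_less\<close>)
  finally show ?thesis ..
qed

lemma mtrace_BBH:
  assumes B: "B \<in> carrier_mat N p"
  shows "mtrace (B * mat_adjoint B) = (\<Sum>a<p. \<Sum>j<N. B $$ (j,a) * cnj (B $$ (j,a)))"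
proof -
  have "mtrace (B * mat_adjoint B) = (\<Sum>j<N. \<Sum>a<p. B $$ (j,a) * cnj (B $$ (j,a)))"
    unfolding mtrace_def using B by (auto simp: scalar_prod_def lessThan_atLeast0 intro!: sum.cong)
  then show ?thesis by (simp add: sum.swap[of _ "{..<N}"])
qed

lemma mtrace_Pm:
  assumes B: "B \<in> carrier_mat N p" and N: "0 < N"
  shows "(\<Sum>r<p*N. B $$ (r mod N, r div N) * cnj (B $$ (r mod N, r div N))) = mtrace (B * mat_adjoint B)"
  unfolding mtrace_BBH[OF B] using sum_div_mod[OF N, where p=p and h="\<lambda>a j. B $$ (j,a) * cnj (B $$ (j,a))"] by simp

lemma Pf_cong: "(\<And>i j. i < n \<Longrightarrow> j < n \<Longrightarrow> f i j = g i j) \<Longrightarrow> Pf n f = Pf n g"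
proof -
  assume h: "\<And>i j. i < n \<Longrightarrow> j < n \<Longrightarrow> f i j = g i j"
  have "qf n f v = qf n g v" for v unfolding qf_def using h by (auto intro!: sum.cong)
  then show ?thesis unfolding Pf_def by simp
qed

lemma Pf_rank1:
  assumes fin: "finite I" and w: "\<forall>t\<in>I. w t \<ge> 0"
  shows "Pf n (\<lambda>r s. \<Sum>t\<in>I. complex_of_real (w t) * (x t r * cnj (x t s)))"
  unfolding Pf_def
proof
  fix v
  define S where "S t = (\<Sum>s<n. cnj (x t s) * v s)" for t
  have "qf n (\<lambda>r s. \<Sum>t\<in>I. complex_of_real (w t) * (x t r * cnj (x t s))) v =
     (\<Sum>r<n. \<Sum>s<n. \<Sum>t\<in>I. complex_of_real (w t) * (x t r * cnj (v r)) * (cnj (x t s) * v s))"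
    unfolding qf_def sum_distrib_right by (intro sum.cong refl) (simp add: algebra_simps)
  also have "\<dots> = (\<Sum>r<n. \<Sum>t\<in>I. \<Sum>s<n. complex_of_real (w t) * (x t r * cnj (v r)) * (cnj (x t s) * v s))"
    by (simp add: sum.swap[of _ I])
  also have "\<dots> = (\<Sum>t\<in>I. \<Sum>r<n. \<Sum>s<n. complex_of_real (w t) * (x t r * cnj (v r)) * (cnj (x t s) * v s))"
    by (rule sum.swap)
  also have "\<dots> = (\<Sum>t\<in>I. complex_of_real (w t) * (cnj (S t) * S t))"
    unfolding S_def by (simp add: sum_distrib_left sum_distrib_right algebra_simps)
  also have "\<dots> = complex_of_real (\<Sum>t\<in>I. w t * (cmod (S t))^2)"
    by (simp add: of_real_sum mult.commute flip: complex_norm_square)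
  finally have e: "qf n (\<lambda>r s. \<Sum>t\<in>I. complex_of_real (w t) * (x t r * cnj (x t s))) v = complex_of_real (\<Sum>t\<in>I. w t * (cmod (S t))^2)" .
  have "(\<Sum>t\<in>I. w t * (cmod (S t))^2) \<ge> 0" using w by (intro sum_nonneg) auto
  then show "Im (qf n (\<lambda>r s. \<Sum>t\<in>I. complex_of_real (w t) * (x t r * cnj (x t s))) v) = 0 \<and>
     0 \<le> Re (qf n (\<lambda>r s. \<Sum>t\<in>I. complex_of_real (w t) * (x t r * cnj (x t s))) v)"
    unfolding e by simp
qed

lemma density_combo:
  assumes fin: "finite I" and w: "\<forall>t\<in>I. w t \<ge> 0" and ws: "(\<Sum>t\<in>I. w t) = 1"
    and B: "\<forall>t\<in>I. B t \<in> carrier_mat N p \<and> mtrace (B t * mat_adjoint (B t)) = 1" and N: "0 < N"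
  shows "density (p*N) (msum (p*N) (p*N) I (\<lambda>t. complex_of_real (w t) \<cdot>\<^sub>m Pm p N (B t)))"
proof -
  let ?X = "msum (p*N) (p*N) I (\<lambda>t. complex_of_real (w t) \<cdot>\<^sub>m Pm p N (B t))"
  let ?x = "\<lambda>t r. B t $$ (r mod N, r div N)"
  have ent: "?X $$ (r,s) = (\<Sum>t\<in>I. complex_of_real (w t) * (?x t r * cnj (?x t s)))" if "r < p*N" "s < p*N" for r s
    using that by (simp add: Pm_def)
  have "Pf (p*N) (\<lambda>r s. ?X $$ (r,s))"
    using Pf_cong[of "p*N" "\<lambda>r s. ?X $$ (r,s)", OF ent] Pf_rank1[OF fin w] by auto
  then have psd: "psd (p*N) ?X" unfolding psd_Pf by auto
  have "mtrace ?X = (\<Sum>r<p*N. \<Sum>t\<in>I. complex_of_real (w t) * (?x t r * cnj (?x t r)))"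
    unfolding mtrace_def using ent by simp
  also have "\<dots> = (\<Sum>t\<in>I. complex_of_real (w t) * (\<Sum>r<p*N. ?x t r * cnj (?x t r)))"
    by (simp add: sum.swap[of _ I] sum_distrib_left)
  also have "\<dots> = (\<Sum>t\<in>I. complex_of_real (w t))"
    using B mtrace_Pm[OF _ N] by (intro sum.cong) auto
  also have "\<dots> = 1" using ws by (simp flip: of_real_sum)
  finally show ?thesis using psd unfolding density_def by auto
qed



lemma aux4: "(c::complex) * x * (c * y) = c * c * (x * y)"
  by (simp add: ac_simps)

lemma aux5:
  fixes u :: "nat \<Rightarrow> nat \<Rightarrow> complex" and Bt :: "nat \<Rightarrow> complex mat"
  assumes e1: "u t r = c * Bt t $$ (r mod N, r div N)" and e2: "u t s = c * Bt t $$ (s mod N, s div N)"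
   and sq': "complex_of_real (w t) = c * c" and cc: "cnj c = c"
  shows "u t r * cnj (u t s) = complex_of_real (w t) * (Bt t $$ (r mod N, r div N) * cnj (Bt t $$ (s mod N, s div N)))"
  unfolding e1 e2 sq' complex_cnj_mult cc by (rule aux4)

theorem lemma8p6:
  fixes p q N k l :: nat
    and M \<sigma> :: "nat \<Rightarrow> complex mat"
    and \<Xi> \<Psi> :: "complex mat \<Rightarrow> complex mat"
  assumes "0 < p" and "0 < q" and "0 < N" and "0 < k"
    and "POVM p l M"
    and "\<forall>i<l. density q (\<sigma> i)"
    and "\<And>X. \<Xi> X = msum q q {..<l} (\<lambda>i. mtrace (X * M i) \<cdot>\<^sub>m \<sigma> i)"
    and "quantum_channel N k \<Psi>"
  shows "tensor_map p N q k \<Xi> \<Psi> ` {X. density (p * N) X} =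
    mat_hull (q * k) (q * k)
      {msum (q * k) (q * k) {..<l} (\<lambda>i. kron (\<sigma> i) (\<Psi> (B * transpose_mat (M i) * mat_adjoint B))) | B.
         B \<in> carrier_mat N p \<and> mtrace (B * mat_adjoint B) = 1}"
proof -
  note p = assms(1) and N = assms(3) and k = assms(4) and Xi = assms(7)
  have Mc: "\<forall>i<l. M i \<in> carrier_mat p p" using assms(5) unfolding POVM_def psd_def by auto
  have sc: "\<forall>i<l. \<sigma> i \<in> carrier_mat q q" using assms(6) unfolding density_def psd_def by auto
  have L: "linear_map N k \<Psi>" using assms(8) unfolding quantum_channel_def by auto
  define G where "G B = msum (q * k) (q * k) {..<l} (\<lambda>i. kron (\<sigma> i) (\<Psi> (B * transpose_mat (M i) * mat_adjoint B)))" for B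
  define T where "T = tensor_map p N q k \<Xi> \<Psi>"
  define S where "S = {msum (q * k) (q * k) {..<l} (\<lambda>i. kron (\<sigma> i) (\<Psi> (B * transpose_mat (M i) * mat_adjoint B))) | B.
         B \<in> carrier_mat N p \<and> mtrace (B * mat_adjoint B) = 1}"
  have TP: "T (Pm p N B) = G B" if "B \<in> carrier_mat N p" for B
    unfolding T_def G_def T_formula[OF Mc sc Xi L k] using R_Pm[OF that] Mc by (intro msum_cong) auto
  have GS: "G B \<in> S" if "B \<in> carrier_mat N p" "mtrace (B * mat_adjoint B) = 1" for B
    unfolding S_def G_def using that by blast
  have TL: "T (msum (p*N) (p*N) I (\<lambda>t. c t \<cdot>\<^sub>m Pm p N (Bf t))) = msum (q*k) (q*k) I (\<lambda>t. c t \<cdot>\<^sub>m T (Pm p N (Bf t)))"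
    if "finite I" for I c Bf
    unfolding T_def by (rule T_lin[OF Mc sc Xi L k that]) auto
  show ?thesis
    unfolding T_def[symmetric] S_def[symmetric]
  proof
    show "mat_hull (q * k) (q * k) S \<subseteq> T ` {X. density (p * N) X}"
    proof
      fix A assume "A \<in> mat_hull (q * k) (q * k) S"
      then obtain n :: nat and w F where wF: "\<forall>t<n. 0 \<le> w t \<and> F t \<in> S" and ws: "(\<Sum>t<n. w t) = 1"
        and A: "A = msum (q*k) (q*k) {..<n} (\<lambda>t. complex_of_real (w t) \<cdot>\<^sub>m F t)"
        unfolding mat_hull_def by blast
      have "\<forall>t<n. \<exists>B. F t = G B \<and> B \<in> carrier_mat N p \<and> mtrace (B * mat_adjoint B) = 1"
        using wF unfolding S_def G_def by blast
      then obtain Bf where Bf: "\<forall>t<n. F t = G (Bf t) \<and> Bf t \<in> carrier_mat N p \<and> mtrace (Bf t * mat_adjoint (Bf t)) = 1"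
        by metis
      define X where "X = msum (p*N) (p*N) {..<n} (\<lambda>t. complex_of_real (w t) \<cdot>\<^sub>m Pm p N (Bf t))"
      have dX: "density (p*N) X" unfolding X_def
        by (rule density_combo) (use wF ws Bf N in auto)
      have "T X = msum (q*k) (q*k) {..<n} (\<lambda>t. complex_of_real (w t) \<cdot>\<^sub>m T (Pm p N (Bf t)))"
        unfolding X_def by (rule TL) simp
      also have "\<dots> = A" unfolding A using Bf TP by (intro msum_cong) auto
      finally show "A \<in> T ` {X. density (p * N) X}" using dX by blast
    qed
  next
    show "T ` {X. density (p * N) X} \<subseteq> mat_hull (q * k) (q * k) S"
    proof
      fix Y assume "Y \<in> T ` {X. density (p * N) X}"
      then obtain X where dX: "density (p*N) X" and Y: "Y = T X" by blast
      let ?n = "p*N"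
      have "Pf ?n (\<lambda>i j. X $$ (i,j))" using dX unfolding density_def psd_Pf by auto
      then obtain u where u: "\<forall>i<?n. \<forall>j<?n. X $$ (i,j) = (\<Sum>t<?n. u t i * cnj (u t j))"
        using Pf_decomp by blast
      define w where "w t = (\<Sum>r<?n. (cmod (u t r))^2)" for t
      have w0: "w t \<ge> 0" for t unfolding w_def by (intro sum_nonneg) auto
      have uc: "u t r * cnj (u t r) = complex_of_real ((cmod (u t r))^2)" for t r
        by (rule complex_norm_square[symmetric])
      have "1 = mtrace X" using dX unfolding density_def by simp
      also have "\<dots> = (\<Sum>r<?n. \<Sum>t<?n. u t r * cnj (u t r))"
        unfolding mtrace_def using dX u unfolding density_def psd_def by auto
      also have "\<dots> = complex_of_real (\<Sum>t<?n. w t)"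
        unfolding uc w_def of_real_sum by (rule sum.swap)
      finally have ws: "(\<Sum>t<?n. w t) = 1"
        by (metis of_real_1 of_real_eq_iff)
      have wz: "u t r = 0" if "w t = 0" "r < ?n" for t r
      proof -
        have "\<forall>r\<in>{..<?n}. (cmod (u t r))^2 = 0" using that(1) unfolding w_def
          by (subst sum_nonneg_eq_0_iff[symmetric]) auto
        then show ?thesis using that(2) by auto
      qed
      define B0 where "B0 = mat N p (\<lambda>(j,a). if j = 0 \<and> a = 0 then (1::complex) else 0)"
      have B0: "B0 \<in> carrier_mat N p" "mtrace (B0 * mat_adjoint B0) = 1"
      proof -
        show B0c: "B0 \<in> carrier_mat N p" unfolding B0_def by simp
        have "mtrace (B0 * mat_adjoint B0) = (\<Sum>a<p. \<Sum>j<N. if a = 0 then (if j = 0 then (1::complex) else 0) else 0)"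
          unfolding mtrace_BBH[OF B0c] unfolding B0_def by (intro sum.cong refl) auto
        also have "\<dots> = (\<Sum>a<p. if a = 0 then (1::complex) else 0)"
          using N by (intro sum.cong refl) auto
        also have "\<dots> = 1" using p by simp
        finally show "mtrace (B0 * mat_adjoint B0) = 1" .
      qed
      define Bt where "Bt t = (if w t = 0 then B0 else mat N p (\<lambda>(j,a). u t (a*N+j) / complex_of_real (sqrt (w t))))" for t
      have Bt: "Bt t \<in> carrier_mat N p \<and> mtrace (Bt t * mat_adjoint (Bt t)) = 1" for t
      proof (cases "w t = 0")
        case True then show ?thesis using B0 unfolding Bt_def by simp
      next
        case False
        then have wp: "w t > 0" using w0[of t] by simp
        have c: "Bt t \<in> carrier_mat N p" unfolding Bt_def using B0 by simp
        have sq: "complex_of_real (sqrt (w t)) * complex_of_real (sqrt (w t)) = complex_of_real (w t)"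
          using wp by (simp flip: of_real_mult)
        have "mtrace (Bt t * mat_adjoint (Bt t)) = (\<Sum>a<p. \<Sum>j<N. u t (a*N+j) * cnj (u t (a*N+j)) / complex_of_real (w t))"
          unfolding mtrace_BBH[OF c] unfolding Bt_def using False sq
          by (intro sum.cong refl) (auto simp: idx_lt)
        also have "\<dots> = (\<Sum>r<?n. u t r * cnj (u t r) / complex_of_real (w t))"
          using sum_div_mod[OF N, where p=p and h="\<lambda>a j. u t (a*N+j) * cnj (u t (a*N+j)) / complex_of_real (w t)"]
          by simp
        also have "\<dots> = complex_of_real (w t) / complex_of_real (w t)"
          unfolding uc w_def of_real_sum sum_divide_distrib by simp
        also have "\<dots> = 1" using False by simp
        finally show ?thesis using c by simp
      qed
      have Xeq: "X = msum ?n ?n {..<?n} (\<lambda>t. complex_of_real (w t) \<cdot>\<^sub>m Pm p N (Bt t))"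
      proof (rule eq_matI)
        fix r s assume "r < dim_row (msum ?n ?n {..<?n} (\<lambda>t. complex_of_real (w t) \<cdot>\<^sub>m Pm p N (Bt t)))"
          "s < dim_col (msum ?n ?n {..<?n} (\<lambda>t. complex_of_real (w t) \<cdot>\<^sub>m Pm p N (Bt t)))"
        then have r: "r < ?n" and s: "s < ?n" by auto
        have rr: "r mod N < N" "r div N < p" "r div N * N + r mod N = r" using r N by (auto simp: less_mult_imp_div_less)
        have ss: "s mod N < N" "s div N < p" "s div N * N + s mod N = s" using s N by (auto simp: less_mult_imp_div_less)
        have "X $$ (r,s) = (\<Sum>t<?n. u t r * cnj (u t s))" using u r s by auto
        also have "\<dots> = (\<Sum>t<?n. complex_of_real (w t) * (Bt t $$ (r mod N, r div N) * cnj (Bt t $$ (s mod N, s div N))))"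
        proof (intro sum.cong refl)
          fix t
          show "u t r * cnj (u t s) = complex_of_real (w t) * (Bt t $$ (r mod N, r div N) * cnj (Bt t $$ (s mod N, s div N)))"
          proof (cases "w t = 0")
            case True then show ?thesis using wz r s by simp
          next
            case False
            then have wp: "w t > 0" using w0[of t] by simp
            have sq: "complex_of_real (sqrt (w t)) * complex_of_real (sqrt (w t)) = complex_of_real (w t)"
              using wp by (simp flip: of_real_mult)
            define c where "c = complex_of_real (sqrt (w t))"
            have c0: "c \<noteq> 0" using wp unfolding c_def by simp
            have cc: "cnj c = c" unfolding c_def by simp
            have "Bt t $$ (r mod N, r div N) = u t r / c"
              unfolding Bt_def c_def using False rr by simp
            then have e1: "u t r = c * Bt t $$ (r mod N, r div N)" using c0 by (metis mult.commute nonzero_eq_divide_eq)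
            have "Bt t $$ (s mod N, s div N) = u t s / c"
              unfolding Bt_def c_def using False ss by simp
            then have e2: "u t s = c * Bt t $$ (s mod N, s div N)" using c0 by (metis mult.commute nonzero_eq_divide_eq)
            have sq': "complex_of_real (w t) = c * c" unfolding c_def by (rule sq[symmetric])
            show ?thesis by (rule aux5[where u=u and t=t and r=r and s=s and c=c and Bt=Bt and N=N and w=w, OF e1 e2 sq' cc])
          qed
        qed
        also have "\<dots> = msum ?n ?n {..<?n} (\<lambda>t. complex_of_real (w t) \<cdot>\<^sub>m Pm p N (Bt t)) $$ (r,s)"
          using r s by (simp add: Pm_def)
        finally show "X $$ (r,s) = msum ?n ?n {..<?n} (\<lambda>t. complex_of_real (w t) \<cdot>\<^sub>m Pm p N (Bt t)) $$ (r,s)" .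
      qed (use dX in \<open>auto simp: density_def psd_def\<close>)
      have "Y = msum (q*k) (q*k) {..<?n} (\<lambda>t. complex_of_real (w t) \<cdot>\<^sub>m T (Pm p N (Bt t)))"
        unfolding Y Xeq by (rule TL) simp
      also have "\<dots> = msum (q*k) (q*k) {..<?n} (\<lambda>t. complex_of_real (w t) \<cdot>\<^sub>m G (Bt t))"
        using TP Bt by (intro msum_cong) auto
      finally have Yeq: "Y = msum (q*k) (q*k) {..<?n} (\<lambda>t. complex_of_real (w t) \<cdot>\<^sub>m G (Bt t))" .
      have "(\<forall>t<?n. 0 \<le> w t \<and> G (Bt t) \<in> S) \<and> (\<Sum>t<?n. w t) = 1 \<and>
          Y = msum (q*k) (q*k) {..<?n} (\<lambda>t. complex_of_real (w t) \<cdot>\<^sub>m G (Bt t))"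
        using w0 ws GS Bt Yeq by auto
      then show "Y \<in> mat_hull (q * k) (q * k) S"
        unfolding mat_hull_def by (intro CollectI exI[of _ "?n"] exI[of _ w] exI[of _ "\<lambda>t. G (Bt t)"])
    qed
  qed
qed

end
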